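(* Let $E \subseteq \mathbb{R}$. Then at least one of the following holds: (1) there is $u \in \mathbb{S}$ such that the restriction of $T_u$ to $E^2$ is a quasi-isometric embedding $E^2 \to \mathbb{R}$; (2) there is a linear map $S : \mathbb{R}^4 \to \mathbb{R}$ such that $S(E^4)$ is dense in $\mathbb{R}$.
   Context: $\mathbb{S}$ is the unit circle in $\mathbb{R}^2$. For $u = (u_1,u_2) \in \mathbb{S}$, $T_u : \mathbb{R}^2 \to \mathbb{R}$ is the orthogonal projection parallel to $u$, i.e. $T_u(x) = \langle x,(u_2,-u_1)\rangle$. For $\lambda,\delta>0$, a map $f : X \to Y$ between subsets of Euclidean spaces is a $(\lambda,\delta)$-quasi-isometry if $\frac{1}{\lambda}\|x-x'\| - \delta \leq \|f(x)-f(x')\| \leq \lambda\|x-x'\| + \delta$ for all $x,x' \in X$ and every $y \in Y$ is within distance $<\delta$ of some $f(x)$; a quasi-isometry is a $(\lambda,\delta)$-quasi-isometry for some $\lambda,\delta > 0$. A map $g : X \to \mathbb{R}$ is a quasi-isometric embedding if it is a quasi-isometry $X \to g(X)$. *)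

theory Defs
  imports "HOL-Analysis.Analysis"
begin

text \<open>Projection parallel to u: T_u(x) = <x, (u_2, -u_1)>.\<close>
definition proj_par :: "real^2 \<Rightarrow> real^2 \<Rightarrow> real" where
  "proj_par u x = x $ 1 * u $ 2 - x $ 2 * u $ 1"

definition qi_map :: "real \<Rightarrow> real \<Rightarrow> ('a::metric_space \<Rightarrow> 'b::metric_space) \<Rightarrow> 'a set \<Rightarrow> 'b set \<Rightarrow> bool" where
  "qi_map l d f X Y \<longleftrightarrow>
     f ` X \<subseteq> Y \<and>
     (\<forall>x\<in>X. \<forall>x'\<in>X. dist x x' / l - d \<le> dist (f x) (f x') \<and> dist (f x) (f x') \<le> l * dist x x' + d) \<and>
     (\<forall>y\<in>Y. \<exists>x\<in>X. dist y (f x) < d)"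

definition quasi_isometry :: "('a::metric_space \<Rightarrow> 'b::metric_space) \<Rightarrow> 'a set \<Rightarrow> 'b set \<Rightarrow> bool" where
  "quasi_isometry f X Y \<longleftrightarrow> (\<exists>l>0. \<exists>d>0. qi_map l d f X Y)"

definition qi_embedding :: "('a::metric_space \<Rightarrow> real) \<Rightarrow> 'a set \<Rightarrow> bool" where
  "qi_embedding g X \<longleftrightarrow> quasi_isometry g X (g ` X)"

end

theory Submission
  imports Defs
begin

lemma dist2: "dist (x::real^2) x' = sqrt ((x$1 - x'$1)^2 + (x$2 - x'$2)^2)"
  by (simp add: dist_vec_def L2_set_def sum_2 dist_real_def power2_abs)

lemma qi_lemma:
  fixes E :: "real set" and t \<epsilon> M :: real
  assumes ep: "\<epsilon> > 0" and M0: "M \<ge> 0"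
    and H: "\<And>x y z w. x\<in>E \<Longrightarrow> y\<in>E \<Longrightarrow> z\<in>E \<Longrightarrow> w\<in>E \<Longrightarrow> \<bar>z-w\<bar> > M
              \<Longrightarrow> \<epsilon>*\<bar>z-w\<bar> \<le> \<bar>x-y-t*(z-w)\<bar>"
  shows "\<exists>u::real^2. norm u = 1 \<and> qi_embedding (proj_par u) {x. \<forall>i. x$i \<in> E}"
proof -
  define s where "s = sqrt (1 + t^2)"
  have s1: "s \<ge> 1" unfolding s_def by simp
  have ss: "s^2 = 1 + t^2" unfolding s_def by simp
  define u :: "real^2" where "u = (\<chi> i. if i = 1 then t/s else 1/s)"
  have u1: "u$1 = t/s" and u2: "u$2 = 1/s" unfolding u_def by auto
  have "norm u = sqrt ((t/s)^2 + (1/s)^2)"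
    using dist2[of u 0] by (simp add: u1 u2)
  also have "(t/s)^2 + (1/s)^2 = 1" proof -
    have "1 + t^2 > 0" by (simp add: add_pos_nonneg)
    then show ?thesis by (simp add: power_divide ss flip: add_divide_distrib)
  qed
  finally have nu: "norm u = 1" by simp
  have pp: "proj_par u x - proj_par u x' = ((x$1-x'$1) - t*(x$2-x'$2))/s" for x x'
    unfolding proj_par_def u1 u2 using s1 by (simp add: field_simps)
  define K where "K = 1 + (\<bar>t\<bar>+1)/\<epsilon>"
  have K1: "K \<ge> 1" unfolding K_def using ep by simp
  have key: "\<bar>a\<bar> + \<bar>b\<bar> \<le> K * (\<bar>a - t*b\<bar> + (\<bar>t\<bar>+1)*M)"
    if ab: "\<exists>x y z w. x\<in>E \<and> y\<in>E \<and> z\<in>E \<and> w\<in>E \<and> a = x-y \<and> b = z-w" for a b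
  proof (cases "\<bar>b\<bar> > M")
    case True
    with ab H have h: "\<epsilon>*\<bar>b\<bar> \<le> \<bar>a - t*b\<bar>" by blast
    have "\<bar>a\<bar> \<le> \<bar>a - t*b\<bar> + \<bar>t\<bar>*\<bar>b\<bar>"
      by (metis abs_mult abs_triangle_ineq add.commute diff_add_cancel)
    hence "\<bar>a\<bar> + \<bar>b\<bar> \<le> \<bar>a - t*b\<bar> + (\<bar>t\<bar>+1)*\<bar>b\<bar>" by (simp add: algebra_simps)
    also have "(\<bar>t\<bar>+1)*\<bar>b\<bar> = ((\<bar>t\<bar>+1)/\<epsilon>) * (\<epsilon>*\<bar>b\<bar>)" using ep by simp
    also have "\<dots> \<le> ((\<bar>t\<bar>+1)/\<epsilon>) * \<bar>a - t*b\<bar>"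
      using h ep by (intro mult_left_mono) auto
    finally have "\<bar>a\<bar> + \<bar>b\<bar> \<le> K * \<bar>a - t*b\<bar>" unfolding K_def by (simp add: algebra_simps)
    also have "\<dots> \<le> K * (\<bar>a - t*b\<bar> + (\<bar>t\<bar>+1)*M)" using K1 M0 by (intro mult_left_mono) auto
    finally show ?thesis .
  next
    case False
    have "\<bar>a\<bar> \<le> \<bar>a - t*b\<bar> + \<bar>t\<bar>*\<bar>b\<bar>"
      by (metis abs_mult abs_triangle_ineq add.commute diff_add_cancel)
    moreover have "\<bar>t\<bar>*\<bar>b\<bar> \<le> \<bar>t\<bar>*M" using False by (intro mult_left_mono) auto
    ultimately have "\<bar>a\<bar> + \<bar>b\<bar> \<le> 1 * (\<bar>a - t*b\<bar> + (\<bar>t\<bar>+1)*M)" using False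
      by (simp add: algebra_simps)
    also have "\<dots> \<le> K * (\<bar>a - t*b\<bar> + (\<bar>t\<bar>+1)*M)" using K1 M0
      by (intro mult_right_mono) auto
    finally show ?thesis .
  qed
  define l where "l = 2 * K * s * (1 + \<bar>t\<bar>)"
  define d where "d = (\<bar>t\<bar>+1)*M/s + 1"
  have l0: "l > 0" unfolding l_def using K1 s1 by (simp add: add_pos_nonneg)
  have d0: "d > 0" unfolding d_def using s1 M0 by (simp add: add_nonneg_pos)
  have lKs: "K * s \<le> l"
  proof -
    have "K * s * 1 \<le> K * s * (2 * (1 + \<bar>t\<bar>))"
      using K1 s1 by (intro mult_left_mono) auto
    then show ?thesis unfolding l_def by (simp add: algebra_simps)
  qed
  let ?X = "{x::real^2. \<forall>i. x$i \<in> E}"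
  have "qi_map l d (proj_par u) ?X (proj_par u ` ?X)"
    unfolding qi_map_def
  proof (intro conjI ballI)
    fix x x' assume x: "x \<in> ?X" and x': "x' \<in> ?X"
    define a where "a = x$1 - x'$1"
    define b where "b = x$2 - x'$2"
    have dd: "dist (proj_par u x) (proj_par u x') = \<bar>a - t*b\<bar>/s"
      using pp[of x x'] s1 by (simp add: dist_real_def a_def b_def)
    have dx: "dist x x' = sqrt (a^2 + b^2)" using dist2 a_def b_def by simp
    have dle: "dist x x' \<le> \<bar>a\<bar> + \<bar>b\<bar>" using dx sqrt_sum_squares_le_sum_abs by simp
    have dge1: "\<bar>a\<bar> \<le> dist x x'"
    proof -
      have "sqrt (a^2) \<le> sqrt (a^2 + b^2)" by (intro real_sqrt_le_mono) simp
      then show ?thesis using dx by simp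
    qed
    have dge2: "\<bar>b\<bar> \<le> dist x x'"
    proof -
      have "sqrt (b^2) \<le> sqrt (a^2 + b^2)" by (intro real_sqrt_le_mono) simp
      then show ?thesis using dx by simp
    qed
    have "\<exists>x y z w. x\<in>E \<and> y\<in>E \<and> z\<in>E \<and> w\<in>E \<and> a = x-y \<and> b = z-w"
      using x x' a_def b_def by blast
    from key[OF this] dle have k: "dist x x' \<le> K * (\<bar>a - t*b\<bar> + (\<bar>t\<bar>+1)*M)" by linarith
    have "dist x x' / l \<le> dist x x' / (K * s)"
      using lKs K1 s1 l0 by (intro divide_left_mono) auto
    also have "\<dots> \<le> K * (\<bar>a - t*b\<bar> + (\<bar>t\<bar>+1)*M) / (K * s)"
      using k K1 s1 by (intro divide_right_mono) auto
    also have "\<dots> = \<bar>a - t*b\<bar>/s + (\<bar>t\<bar>+1)*M/s"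
      using K1 s1 by (simp add: field_simps)
    finally show "dist x x' / l - d \<le> dist (proj_par u x) (proj_par u x')"
      unfolding dd d_def by simp
    have "\<bar>a - t*b\<bar> \<le> \<bar>a\<bar> + \<bar>t\<bar>*\<bar>b\<bar>" using abs_triangle_ineq4[of a "t*b"] by (simp add: abs_mult)
    also have "\<dots> \<le> dist x x' + \<bar>t\<bar> * dist x x'" using dge1 dge2 by (simp add: add_mono mult_left_mono)
    finally have "\<bar>a - t*b\<bar>/s \<le> (1 + \<bar>t\<bar>) * dist x x' / s" using s1
      by (intro divide_right_mono) (auto simp: algebra_simps)
    also have "\<dots> \<le> (1 + \<bar>t\<bar>) * dist x x'" using s1
      using divide_left_mono[of 1 s "(1 + \<bar>t\<bar>) * dist x x'"] by simp
    also have "\<dots> \<le> l * dist x x'"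
    proof -
      have "1 + \<bar>t\<bar> \<le> l" unfolding l_def using K1 s1
      proof -
        have "1 * 1 \<le> K * s" using K1 s1 by (intro mult_mono) auto
        then have "1 * (1 + \<bar>t\<bar>) \<le> (2 * K * s) * (1 + \<bar>t\<bar>)"
          by (intro mult_right_mono) auto
        then show "1 + \<bar>t\<bar> \<le> 2 * K * s * (1 + \<bar>t\<bar>)" by simp
      qed
      then show ?thesis by (intro mult_right_mono) auto
    qed
    finally show "dist (proj_par u x) (proj_par u x') \<le> l * dist x x' + d"
      using dd d0 by linarith
  next
    fix y assume "y \<in> proj_par u ` ?X"
    then show "\<exists>x\<in>?X. dist y (proj_par u x) < d" using d0 by auto
  qed auto
  then have "qi_embedding (proj_par u) ?X"
    unfolding qi_embedding_def quasi_isometry_def using l0 d0 by blast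
  then show ?thesis using nu by blast
qed


lemma dense_lemma:
  fixes E :: "real set"
  assumes H: "\<And>t e M. e > 0 \<Longrightarrow> \<exists>x\<in>E. \<exists>y\<in>E. \<exists>z\<in>E. \<exists>w\<in>E. \<bar>z-w\<bar> > M \<and> \<bar>x-y-t*(z-w)\<bar> < e*\<bar>z-w\<bar>"
  shows "\<exists>S::real^4 \<Rightarrow> real. linear S \<and> closure (S ` {x. \<forall>i. x$i \<in> E}) = UNIV"
proof -
  define F where "F q k = (\<Union>(x,y,z,w)\<in>E\<times>E\<times>E\<times>E. {t::real. \<bar>x-y-t*(z-w)-q\<bar> < 1/(real k+1)})"
    for q :: real and k :: nat
  have memF: "t \<in> F q k \<longleftrightarrow> (\<exists>x\<in>E. \<exists>y\<in>E. \<exists>z\<in>E. \<exists>w\<in>E. \<bar>x-y-t*(z-w)-q\<bar> < 1/(real k+1))"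
    for t q k by (auto simp: F_def)
  have openF: "open (F q k)" for q k
    unfolding F_def by (intro open_UN ballI) (auto intro!: open_Collect_less continuous_intros)
  have denseF: "closure (F q k) = UNIV" for q k
  proof -
    have "x0 \<in> closure (F q k)" for x0
      unfolding closure_approachable
    proof (intro allI impI)
      fix e :: real assume e: "e > 0"
      obtain x y z w where E4: "x\<in>E" "y\<in>E" "z\<in>E" "w\<in>E"
        and bM: "\<bar>z-w\<bar> > 2*\<bar>q\<bar>/e" and ap: "\<bar>x-y-x0*(z-w)\<bar> < e/2*\<bar>z-w\<bar>"
        using H[where t=x0 and e="e/2" and M="2*\<bar>q\<bar>/e"] e by auto
      define b where "b = z - w"
      have bpos: "\<bar>b\<bar> > 0" using bM e b_def by (smt (verit) divide_nonneg_pos)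
      have qb: "2*\<bar>q\<bar> < e*\<bar>b\<bar>" using bM e b_def by (simp add: divide_less_eq mult.commute)
      define t where "t = (x-y-q)/b"
      have "x-y-t*(z-w)-q = 0" using bpos unfolding t_def b_def by auto
      then have tF: "t \<in> F q k" using memF E4 by fastforce
      have "(t - x0) * b = x-y-q-x0*b" using bpos unfolding t_def by (simp add: field_simps)
      then have "\<bar>t - x0\<bar> * \<bar>b\<bar> = \<bar>x-y-x0*b - q\<bar>" by (simp add: abs_mult[symmetric] algebra_simps)
      also have "\<dots> \<le> \<bar>x-y-x0*b\<bar> + \<bar>q\<bar>" by (rule abs_triangle_ineq4)
      also have "\<dots> < e * \<bar>b\<bar>" using ap qb b_def by simp
      finally have "\<bar>t - x0\<bar> < e" using bpos by simp
      then show "\<exists>y\<in>F q k. dist y x0 < e" using tF by (auto simp: dist_real_def)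
    qed
    then show ?thesis by auto
  qed
  define G where "G = (\<lambda>(q,k). F q k) ` (\<rat> \<times> (UNIV::nat set))"
  have "UNIV \<subseteq> closure (\<Inter>G)"
  proof (rule Baire)
    show "closed (UNIV::real set)" by simp
    show "countable G" unfolding G_def by (intro countable_image countable_SIGMA countable_rat) auto
    fix T assume "T \<in> G"
    then show "openin (top_of_set UNIV) T \<and> UNIV \<subseteq> closure T"
      unfolding G_def using openF denseF by auto
  qed
  then have "\<Inter>G \<noteq> {}" by (metis UNIV_I closure_empty empty_iff subsetD)
  then obtain t where tG: "t \<in> \<Inter>G" by blast
  have tF: "t \<in> F q k" if "q \<in> \<rat>" for q k using tG that unfolding G_def by auto
  define S where "S = (\<lambda>v::real^4. v$1 - v$2 - t*(v$3 - v$4))"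
  have lin: "linear S" unfolding S_def by (intro linearI) (auto simp: algebra_simps)
  have "y0 \<in> closure (S ` {x. \<forall>i. x$i \<in> E})" for y0
    unfolding closure_approachable
  proof (intro allI impI)
    fix e :: real assume e: "e > 0"
    obtain q where q: "q \<in> \<rat>" "y0 < q" "q < y0 + e/2" using Rats_dense_in_real[of y0 "y0+e/2"] e by auto
    obtain k where k: "inverse (real (Suc k)) < e/2" using reals_Archimedean[of "e/2"] e by auto
    obtain x y z w where E4: "x\<in>E" "y\<in>E" "z\<in>E" "w\<in>E" and ap: "\<bar>x-y-t*(z-w)-q\<bar> < 1/(real k+1)"
      using tF[OF q(1), of k] memF by blast
    define v :: "real^4" where "v = (\<chi> i. if i = 1 then x else if i = 2 then y else if i = 3 then z else w)"
    have vX: "v \<in> {x. \<forall>i. x$i \<in> E}" unfolding v_def using E4 by auto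
    have Sv: "S v = x-y-t*(z-w)" unfolding S_def v_def by simp
    have "1/(real k+1) < e/2" using k by (simp add: inverse_eq_divide add.commute)
    then have "dist (S v) y0 < e" using ap q unfolding Sv dist_real_def by linarith
    then show "\<exists>y\<in>S ` {x. \<forall>i. x$i \<in> E}. dist y y0 < e" using vX by blast
  qed
  then have "closure (S ` {x. \<forall>i. x$i \<in> E}) = UNIV" by auto
  then show ?thesis using lin by blast
qed

theorem lemma3p3:
  fixes E :: "real set"
  shows "(\<exists>u::real^2. norm u = 1 \<and> qi_embedding (proj_par u) {x::real^2. \<forall>i. x $ i \<in> E})
       \<or> (\<exists>S::real^4 \<Rightarrow> real. linear S \<and> closure (S ` {x::real^4. \<forall>i. x $ i \<in> E}) = UNIV)"
proof (cases "\<forall>t e M. e > 0 \<longrightarrow> (\<exists>x\<in>E. \<exists>y\<in>E. \<exists>z\<in>E. \<exists>w\<in>E. \<bar>z-w\<bar> > M \<and> \<bar>x-y-t*(z-w)\<bar> < e*\<bar>z-w\<bar>)")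
  case True
  then show ?thesis using dense_lemma[of E] by blast
next
  case False
  then obtain t e M where e: "e > 0" and
    H: "\<And>x y z w. x\<in>E \<Longrightarrow> y\<in>E \<Longrightarrow> z\<in>E \<Longrightarrow> w\<in>E \<Longrightarrow> \<bar>z-w\<bar> > M \<Longrightarrow> e*\<bar>z-w\<bar> \<le> \<bar>x-y-t*(z-w)\<bar>"
    by (meson not_le)
  have H': "e*\<bar>z-w\<bar> \<le> \<bar>x-y-t*(z-w)\<bar>"
    if "x\<in>E" "y\<in>E" "z\<in>E" "w\<in>E" "\<bar>z-w\<bar> > max M 0" for x y z w
    using H that by simp
  have "max M 0 \<ge> 0" by simp
  from qi_lemma[of e "max M 0" E t, OF e this H'] show ?thesis by blast
qed

end
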